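(* $\gamma_{2t}(K_2\Box K_3)=4$, $\gamma_{2t}(K_3\Box K_4)=6$, $\gamma_{2t}(K_4\Box K_5)=7$, $\gamma_{2t}(K_5\Box K_6)=9$, $\gamma_{2t}(K_6\Box K_7)=10$, $\gamma_{2t}(K_2\Box K_4)=4$, $\gamma_{2t}(K_3\Box K_5)=6$, $\gamma_{2t}(K_4\Box K_6)=8$, $\gamma_{2t}(K_5\Box K_7)=9$, $\gamma_{2t}(K_6\Box K_8)=11$ and $\gamma_{2t}(K_7\Box K_9)=13$.
   Context: For a graph $G=(V,E)$, a set $S\subseteq V$ is a total $2$-dominating set if every vertex of $V$ (including those in $S$) is adjacent to at least $2$ vertices of $S$; $\gamma_{2t}(G)$ is the minimum cardinality of such a set. $G\Box H$ denotes the Cartesian product: vertex set $V(G)\times V(H)$, with $(u_1,v_1)\sim(u_2,v_2)$ iff either $u_1=u_2$ and $v_1\sim v_2$, or $v_1=v_2$ and $u_1\sim u_2$. $K_n$ is the complete graph on $n$ vertices. *)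

theory Defs
  imports Main
begin

type_synonym 'a graph = "'a set \<times> ('a \<Rightarrow> 'a \<Rightarrow> bool)"

definition verts :: "'a graph \<Rightarrow> 'a set" where "verts G = fst G"
definition adj :: "'a graph \<Rightarrow> 'a \<Rightarrow> 'a \<Rightarrow> bool" where "adj G = snd G"

definition complete_graph :: "nat \<Rightarrow> nat graph" where
  "complete_graph n = ({..<n}, (\<lambda>x y. x \<noteq> y))"

definition cart_prod :: "'a graph \<Rightarrow> 'b graph \<Rightarrow> ('a \<times> 'b) graph" where
  "cart_prod G H = (verts G \<times> verts H,
     (\<lambda>(u1, v1) (u2, v2). (u1 = u2 \<and> adj H v1 v2) \<or> (v1 = v2 \<and> adj G u1 u2)))"

definition total_k_dominating :: "'a graph \<Rightarrow> nat \<Rightarrow> 'a set \<Rightarrow> bool" where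
  "total_k_dominating G k S \<longleftrightarrow>
     S \<subseteq> verts G \<and> (\<forall>v \<in> verts G. card {u \<in> S. adj G v u} \<ge> k)"

definition gamma_2t :: "'a graph \<Rightarrow> nat" where
  "gamma_2t G = (LEAST n. \<exists>S. total_k_dominating G 2 S \<and> card S = n)"

end

theory Submission
  imports Defs Complex_Main
begin

lemma verts_cp: "verts (cart_prod (complete_graph m) (complete_graph n)) = {..<m} \<times> {..<n}"
  by (simp add: cart_prod_def verts_def complete_graph_def)

lemma adj_cp: "adj (cart_prod (complete_graph m) (complete_graph n)) (i,j) (u,v) = ((i=u \<and> j\<noteq>v) \<or> (j=v \<and> i\<noteq>u))"
  by (auto simp add: cart_prod_def adj_def complete_graph_def)

lemma nb_card:
  fixes S :: "(nat \<times> nat) set"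
  assumes fin: "finite S"
  shows "card {x \<in> S. adj (cart_prod (complete_graph m) (complete_graph n)) (i,j) x}
     = card ({v. (i,v) \<in> S} - {j}) + card ({u. (u,j) \<in> S} - {i})"
proof -
  let ?A = "(\<lambda>v. (i,v)) ` ({v. (i,v) \<in> S} - {j})"
  let ?B = "(\<lambda>u. (u,j)) ` ({u. (u,j) \<in> S} - {i})"
  have eq: "{x \<in> S. adj (cart_prod (complete_graph m) (complete_graph n)) (i,j) x} = ?A \<union> ?B"
    by (auto simp: adj_cp)
  have fA: "finite ({v. (i,v) \<in> S} - {j})"
    using finite_imageI[OF fin, of snd] by (rule finite_subset[rotated]) force
  have fB: "finite ({u. (u,j) \<in> S} - {i})"
    using finite_imageI[OF fin, of fst] by (rule finite_subset[rotated]) force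
  have "card (?A \<union> ?B) = card ?A + card ?B"
    by (rule card_Un_disjoint) (use fA fB in auto)
  moreover have "card ?A = card ({v. (i,v) \<in> S} - {j})" by (rule card_image) (auto simp: inj_on_def)
  moreover have "card ?B = card ({u. (u,j) \<in> S} - {i})" by (rule card_image) (auto simp: inj_on_def)
  ultimately show ?thesis using eq by simp
qed

lemma row_fin: fixes S :: "(nat \<times> nat) set" assumes "S \<subseteq> {..<m} \<times> {..<n}" shows "finite {v. (i,v) \<in> S}"
proof -
  have "{v. (i,v) \<in> S} \<subseteq> {..<n}" using assms by blast
  thus ?thesis by (rule finite_subset) simp
qed

lemma card_rows:
  fixes S :: "(nat \<times> nat) set" assumes "S \<subseteq> {..<m} \<times> {..<n}"
  shows "card S = (\<Sum>i<m. card {v. (i,v) \<in> S})"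
proof -
  have S: "S = Sigma {..<m} (\<lambda>i. {v. (i,v) \<in> S})" using assms by blast
  have f: "\<forall>i\<in>{..<m}. finite {v. (i,v) \<in> S}" using row_fin[OF assms] by blast
  have "card (Sigma {..<m} (\<lambda>i. {v. (i,v) \<in> S})) = (\<Sum>i<m. card {v. (i,v) \<in> S})"
    by (rule card_SigmaI) (use f in auto)
  moreover have "card S = card (Sigma {..<m} (\<lambda>i. {v. (i,v) \<in> S}))" using S by (rule arg_cong)
  ultimately show ?thesis by simp
qed

lemma card_cols:
  fixes S :: "(nat \<times> nat) set" assumes "S \<subseteq> {..<m} \<times> {..<n}"
  shows "card S = (\<Sum>j<n. card {u. (u,j) \<in> S})"
proof -
  have "prod.swap ` S \<subseteq> {..<n} \<times> {..<m}" using assms by auto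
  from card_rows[OF this] have "card (prod.swap ` S) = (\<Sum>j<n. card {u. (j,u) \<in> prod.swap ` S})" .
  moreover have "card (prod.swap ` S) = card S" by (rule card_image) simp
  moreover have "\<And>j. {u. (j,u) \<in> prod.swap ` S} = {u. (u,j) \<in> S}" by force
  ultimately show ?thesis by simp
qed

lemma sum_rows_real:
  fixes S :: "(nat \<times> nat) set" assumes "S \<subseteq> {..<m} \<times> {..<n}"
  shows "(\<Sum>x\<in>S. f (fst x)) = (\<Sum>i<m. real (card {v. (i,v) \<in> S}) * f i)"
proof -
  have S: "S = Sigma {..<m} (\<lambda>i. {v. (i,v) \<in> S})" using assms by blast
  have f: "\<forall>i\<in>{..<m}. finite {v. (i,v) \<in> S}" using row_fin[OF assms] by blast
  have "(\<Sum>x\<in>Sigma {..<m} (\<lambda>i. {v. (i,v) \<in> S}). f (fst x)) = (\<Sum>i<m. \<Sum>v\<in>{v. (i,v) \<in> S}. f i)"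
    using sum.Sigma[of "{..<m}" "\<lambda>i. {v. (i,v) \<in> S}" "\<lambda>i v. f i"] f by (simp add: case_prod_beta)
  moreover have "(\<Sum>i<m. \<Sum>v\<in>{v. (i,v) \<in> S}. f i) = (\<Sum>i<m. real (card {v. (i,v) \<in> S}) * f i)" by simp
  moreover have "(\<Sum>x\<in>S. f (fst x)) = (\<Sum>x\<in>Sigma {..<m} (\<lambda>i. {v. (i,v) \<in> S}). f (fst x))"
    using S by (rule arg_cong)
  ultimately show ?thesis by simp
qed

lemma sum_cols_real:
  fixes S :: "(nat \<times> nat) set" assumes "S \<subseteq> {..<m} \<times> {..<n}"
  shows "(\<Sum>x\<in>S. f (snd x)) = (\<Sum>j<n. real (card {u. (u,j) \<in> S}) * f j)"
proof -
  have sub: "prod.swap ` S \<subseteq> {..<n} \<times> {..<m}" using assms by auto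
  have "(\<Sum>x\<in>S. f (snd x)) = (\<Sum>x\<in>prod.swap ` S. f (fst x))"
    by (subst sum.reindex) (auto simp: comp_def)
  also have "\<dots> = (\<Sum>j<n. real (card {u. (j,u) \<in> prod.swap ` S}) * f j)"
    by (rule sum_rows_real[OF sub])
  also have "\<dots> = (\<Sum>j<n. real (card {u. (u,j) \<in> S}) * f j)"
  proof -
    have "\<And>j. {u. (j,u) \<in> prod.swap ` S} = {u. (u,j) \<in> S}" by force
    thus ?thesis by simp
  qed
  finally show ?thesis .
qed

lemma odd_sum: "finite A \<Longrightarrow> (\<forall>i\<in>A. odd (f i :: nat)) \<Longrightarrow> even (sum f A + card A)"
  by (induction A rule: finite_induct) auto

lemma aux: fixes a b :: nat assumes "a \<ge> 1" "b \<ge> 1" "a + b \<ge> 4"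
  shows "1/real a + 1/real b \<le> 4/3 \<and> (1/real a + 1/real b = 4/3 \<longrightarrow> odd a)"
proof -
  have b1: "1/real b \<le> 1" using assms by simp
  have "a = 1 \<or> a = 2 \<or> a = 3 \<or> a \<ge> 4" using assms(1) by arith
  then consider "a = 1" | "a = 2" | "a = 3" | "a \<ge> 4" by blast
  then show ?thesis
  proof cases
    case 1
    then have "b \<ge> 3" using assms by simp
    then have "1/real b \<le> 1/3" by (simp add: field_simps)
    with 1 show ?thesis by simp
  next
    case 2
    then have "b \<ge> 2" using assms by simp
    then have "1/real b \<le> 1/2" by (simp add: field_simps)
    with 2 show ?thesis by simp
  next
    case 3
    with b1 show ?thesis by simp
  next
    case 4
    then have "1/real a \<le> 1/4" by (simp add: field_simps)
    with b1 show ?thesis by simp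
  qed
qed

lemma lower:
  fixes S :: "(nat \<times> nat) set"
  assumes dom: "total_k_dominating (cart_prod (complete_graph m) (complete_graph n)) 2 S"
  shows "2*n \<le> card S \<or> 2*m \<le> card S \<or> (3*(m+n) \<le> 4*card S \<and> (4*card S = 3*(m+n) \<longrightarrow> even (card S + m)))"
proof -
  define R where "R i = {v. (i,v) \<in> S}" for i
  define C where "C j = {u. (u,j) \<in> S}" for j
  have sub: "S \<subseteq> {..<m} \<times> {..<n}" using dom by (simp add: total_k_dominating_def verts_cp)
  have finS: "finite S" using sub by (rule finite_subset) simp
  have finR: "finite (R i)" for i unfolding R_def by (rule row_fin[OF sub])
  have finC: "finite (C j)" for j
  proof -
    have "C j \<subseteq> {..<m}" using sub unfolding C_def by blast
    thus ?thesis by (rule finite_subset) simp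
  qed
  have d2: "2 \<le> card (R i - {j}) + card (C j - {i})" if "i < m" "j < n" for i j
  proof -
    have "(i,j) \<in> verts (cart_prod (complete_graph m) (complete_graph n))" using that by (simp add: verts_cp)
    then have "2 \<le> card {x \<in> S. adj (cart_prod (complete_graph m) (complete_graph n)) (i,j) x}"
      using dom by (simp add: total_k_dominating_def)
    then show ?thesis using nb_card[OF finS, of m n i j] unfolding R_def C_def by simp
  qed
  have cS_rows: "card S = (\<Sum>i<m. card (R i))" unfolding R_def by (rule card_rows[OF sub])
  have cS_cols: "card S = (\<Sum>j<n. card (C j))" unfolding C_def by (rule card_cols[OF sub])
  show ?thesis
  proof (cases "\<exists>i<m. R i = {}")
    case True
    then obtain i where i: "i < m" "R i = {}" by blast
    have "\<forall>j\<in>{..<n}. 2 \<le> card (C j)"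
    proof
      fix j assume "j \<in> {..<n}"
      then have "2 \<le> card (R i - {j}) + card (C j - {i})" using i(1) by (intro d2) simp_all
      moreover have "card (C j - {i}) \<le> card (C j)" by (rule card_Diff1_le)
      ultimately show "2 \<le> card (C j)" using i by simp
    qed
    then have "card {..<n} * 2 \<le> (\<Sum>j<n. card (C j))" using sum_bounded_below[of "{..<n}" 2 "\<lambda>j. card (C j)"] by simp
    then show ?thesis using cS_cols by simp
  next
    case F1: False
    show ?thesis
    proof (cases "\<exists>j<n. C j = {}")
      case True
      then obtain j where j: "j < n" "C j = {}" by blast
      have "\<forall>i\<in>{..<m}. 2 \<le> card (R i)"
      proof
        fix i assume "i \<in> {..<m}"
        then have "2 \<le> card (R i - {j}) + card (C j - {i})" using j(1) by (intro d2) simp_all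
        moreover have "card (R i - {j}) \<le> card (R i)" by (rule card_Diff1_le)
        ultimately show "2 \<le> card (R i)" using j by simp
      qed
      then have "card {..<m} * 2 \<le> (\<Sum>i<m. card (R i))" using sum_bounded_below[of "{..<m}" 2 "\<lambda>i. card (R i)"] by simp
      then show ?thesis using cS_rows by simp
    next
      case F2: False
      have Rpos: "card (R i) \<ge> 1" if "i < m" for i using F1 that finR[of i] by (auto simp: card_gt_0_iff Suc_le_eq)
      have Cpos: "card (C j) \<ge> 1" if "j < n" for j using F2 that finC[of j] by (auto simp: card_gt_0_iff Suc_le_eq)
      define g where "g x = 4/3 - 1/real (card (R (fst x))) - 1/real (card (C (snd x)))" for x
      have g4: "card (R i) + card (C j) \<ge> 4" if "(i,j) \<in> S" for i j
      proof -
        have ij: "i < m" "j < n" using that sub by auto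
        have "j \<in> R i" "i \<in> C j" using that unfolding R_def C_def by auto
        then have "card (R i - {j}) = card (R i) - 1" "card (C j - {i}) = card (C j) - 1"
          using finR finC by (auto simp: card_Diff_singleton)
        with d2[OF ij] Rpos[OF ij(1)] Cpos[OF ij(2)] show ?thesis by linarith
      qed
      have gprop: "g x \<ge> 0 \<and> (g x = 0 \<longrightarrow> odd (card (R (fst x))))" if "x \<in> S" for x
      proof -
        obtain i j where x: "x = (i,j)" by (cases x)
        have ij: "i < m" "j < n" using that sub x by auto
        from aux[OF Rpos[OF ij(1)] Cpos[OF ij(2)] g4] that x
        show ?thesis unfolding g_def by auto
      qed
      have s1: "(\<Sum>x\<in>S. 1/real (card (R (fst x)))) = real m"
      proof -
        have "(\<Sum>x\<in>S. 1/real (card (R (fst x)))) = (\<Sum>i<m. real (card (R i)) * (1/real (card (R i))))"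
          unfolding R_def by (rule sum_rows_real[OF sub])
        also have "\<dots> = (\<Sum>i<m. 1)" using Rpos by (intro sum.cong) (auto simp: Suc_le_eq)
        finally show ?thesis by simp
      qed
      have s2: "(\<Sum>x\<in>S. 1/real (card (C (snd x)))) = real n"
      proof -
        have "(\<Sum>x\<in>S. 1/real (card (C (snd x)))) = (\<Sum>j<n. real (card (C j)) * (1/real (card (C j))))"
          unfolding C_def by (rule sum_cols_real[OF sub])
        also have "\<dots> = (\<Sum>j<n. 1)" using Cpos by (intro sum.cong) (auto simp: Suc_le_eq)
        finally show ?thesis by simp
      qed
      have sg: "(\<Sum>x\<in>S. g x) = 4/3 * real (card S) - real m - real n"
        unfolding g_def using s1 s2 by (simp add: sum_subtractf)
      have "0 \<le> (\<Sum>x\<in>S. g x)" using gprop by (intro sum_nonneg) auto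
      then have ineq: "3*(m+n) \<le> 4*card S" using sg by simp
      have "even (card S + m)" if eq: "4*card S = 3*(m+n)"
      proof -
        have "(\<Sum>x\<in>S. g x) = 0" using sg eq
        proof -
          have "real (4*card S) = real (3*(m+n))" using eq by (simp only: of_nat_eq_iff)
          then show ?thesis using sg by (simp add: algebra_simps)
        qed
        then have g0: "\<forall>x\<in>S. g x = 0" using gprop finS by (subst (asm) sum_nonneg_eq_0_iff) auto
        have "\<forall>i\<in>{..<m}. odd (card (R i))"
        proof
          fix i assume "i \<in> {..<m}"
          then have "R i \<noteq> {}" using F1 by auto
          then obtain j where "(i,j) \<in> S" unfolding R_def by auto
          then show "odd (card (R i))" using g0 gprop by fastforce
        qed
        from odd_sum[OF _ this] cS_rows show ?thesis by simp
      qed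
      with ineq show ?thesis by simp
    qed
  qed
qed

definition chk :: "nat \<Rightarrow> nat \<Rightarrow> (nat \<times> nat) list \<Rightarrow> bool" where
  "chk m n xs \<longleftrightarrow> list_all (\<lambda>(u,v). u < m \<and> v < n) xs \<and>
     list_all (\<lambda>i. list_all (\<lambda>j. 2 \<le> length (filter (\<lambda>(u,v). (i=u \<and> j\<noteq>v) \<or> (j=v \<and> i\<noteq>u)) xs)) [0..<n]) [0..<m]"

lemma chk_dom:
  assumes "distinct xs" "chk m n xs"
  shows "total_k_dominating (cart_prod (complete_graph m) (complete_graph n)) 2 (set xs)"
  unfolding total_k_dominating_def
proof (intro conjI ballI)
  show "set xs \<subseteq> verts (cart_prod (complete_graph m) (complete_graph n))"
    using assms(2) by (auto simp: chk_def verts_cp list_all_iff)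
next
  fix x assume "x \<in> verts (cart_prod (complete_graph m) (complete_graph n))"
  then obtain i j where x: "x = (i,j)" "i < m" "j < n" by (auto simp: verts_cp)
  let ?P = "(\<lambda>(u,v). (i=u \<and> j\<noteq>v) \<or> (j=v \<and> i\<noteq>u))"
  have "{u \<in> set xs. adj (cart_prod (complete_graph m) (complete_graph n)) x u} = set (filter ?P xs)"
    using x by (auto simp: adj_cp)
  moreover have "card (set (filter ?P xs)) = length (filter ?P xs)"
    using assms(1) by (intro distinct_card) simp
  moreover have "2 \<le> length (filter ?P xs)" using assms(2) x by (auto simp: chk_def list_all_iff)
  ultimately show "2 \<le> card {u \<in> set xs. adj (cart_prod (complete_graph m) (complete_graph n)) x u}" by simp
qed

lemma gamma_eq:
  assumes "distinct xs" "chk m n xs" "length xs = k"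
    and lb: "\<And>S. total_k_dominating (cart_prod (complete_graph m) (complete_graph n)) 2 S \<Longrightarrow> k \<le> card S"
  shows "gamma_2t (cart_prod (complete_graph m) (complete_graph n)) = k"
  unfolding gamma_2t_def
proof (rule Least_equality)
  show "\<exists>S. total_k_dominating (cart_prod (complete_graph m) (complete_graph n)) 2 S \<and> card S = k"
    using chk_dom[OF assms(1,2)] assms(1,3) distinct_card by blast
next
  fix y assume "\<exists>S. total_k_dominating (cart_prod (complete_graph m) (complete_graph n)) 2 S \<and> card S = y"
  then show "k \<le> y" using lb by blast
qed


lemma g_2_3: "gamma_2t (cart_prod (complete_graph 2) (complete_graph 3)) = 4"
proof (rule gamma_eq[where xs = "[(0, 0), (0, 1), (1, 0), (1, 1)]"])
  show "chk 2 3 [(0, 0), (0, 1), (1, 0), (1, 1)]" by code_simp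
  fix S assume "total_k_dominating (cart_prod (complete_graph 2) (complete_graph 3)) 2 S"
  from lower[OF this] show "4 \<le> card S" by presburger
qed simp_all

lemma g_3_4: "gamma_2t (cart_prod (complete_graph 3) (complete_graph 4)) = 6"
proof (rule gamma_eq[where xs = "[(0, 1), (0, 2), (1, 2), (1, 3), (2, 1), (2, 3)]"])
  show "chk 3 4 [(0, 1), (0, 2), (1, 2), (1, 3), (2, 1), (2, 3)]" by code_simp
  fix S assume "total_k_dominating (cart_prod (complete_graph 3) (complete_graph 4)) 2 S"
  from lower[OF this] show "6 \<le> card S" by presburger
qed simp_all

lemma g_4_5: "gamma_2t (cart_prod (complete_graph 4) (complete_graph 5)) = 7"
proof (rule gamma_eq[where xs = "[(0, 4), (1, 4), (2, 4), (3, 0), (3, 1), (3, 2), (3, 3)]"])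
  show "chk 4 5 [(0, 4), (1, 4), (2, 4), (3, 0), (3, 1), (3, 2), (3, 3)]" by code_simp
  fix S assume "total_k_dominating (cart_prod (complete_graph 4) (complete_graph 5)) 2 S"
  from lower[OF this] show "7 \<le> card S" by presburger
qed simp_all

lemma g_5_6: "gamma_2t (cart_prod (complete_graph 5) (complete_graph 6)) = 9"
proof (rule gamma_eq[where xs = "[(0, 4), (1, 0), (1, 1), (1, 4), (2, 4), (3, 2), (3, 3), (3, 5), (4, 4)]"])
  show "chk 5 6 [(0, 4), (1, 0), (1, 1), (1, 4), (2, 4), (3, 2), (3, 3), (3, 5), (4, 4)]" by code_simp
  fix S assume "total_k_dominating (cart_prod (complete_graph 5) (complete_graph 6)) 2 S"
  from lower[OF this] show "9 \<le> card S" by presburger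
qed simp_all

lemma g_6_7: "gamma_2t (cart_prod (complete_graph 6) (complete_graph 7)) = 10"
proof (rule gamma_eq[where xs = "[(0, 2), (1, 2), (2, 2), (3, 4), (3, 5), (3, 6), (4, 2), (5, 0), (5, 1), (5, 3)]"])
  show "chk 6 7 [(0, 2), (1, 2), (2, 2), (3, 4), (3, 5), (3, 6), (4, 2), (5, 0), (5, 1), (5, 3)]" by code_simp
  fix S assume "total_k_dominating (cart_prod (complete_graph 6) (complete_graph 7)) 2 S"
  from lower[OF this] show "10 \<le> card S" by presburger
qed simp_all

lemma g_2_4: "gamma_2t (cart_prod (complete_graph 2) (complete_graph 4)) = 4"
proof (rule gamma_eq[where xs = "[(0, 0), (0, 3), (1, 0), (1, 3)]"])
  show "chk 2 4 [(0, 0), (0, 3), (1, 0), (1, 3)]" by code_simp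
  fix S assume "total_k_dominating (cart_prod (complete_graph 2) (complete_graph 4)) 2 S"
  from lower[OF this] show "4 \<le> card S" by presburger
qed simp_all

lemma g_3_5: "gamma_2t (cart_prod (complete_graph 3) (complete_graph 5)) = 6"
proof (rule gamma_eq[where xs = "[(0, 1), (0, 4), (1, 1), (1, 3), (2, 3), (2, 4)]"])
  show "chk 3 5 [(0, 1), (0, 4), (1, 1), (1, 3), (2, 3), (2, 4)]" by code_simp
  fix S assume "total_k_dominating (cart_prod (complete_graph 3) (complete_graph 5)) 2 S"
  from lower[OF this] show "6 \<le> card S" by presburger
qed simp_all

lemma g_4_6: "gamma_2t (cart_prod (complete_graph 4) (complete_graph 6)) = 8"
proof (rule gamma_eq[where xs = "[(0, 2), (0, 3), (1, 0), (1, 3), (2, 0), (2, 2), (3, 0), (3, 3)]"])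
  show "chk 4 6 [(0, 2), (0, 3), (1, 0), (1, 3), (2, 0), (2, 2), (3, 0), (3, 3)]" by code_simp
  fix S assume "total_k_dominating (cart_prod (complete_graph 4) (complete_graph 6)) 2 S"
  from lower[OF this] show "8 \<le> card S" by presburger
qed simp_all

lemma g_5_7: "gamma_2t (cart_prod (complete_graph 5) (complete_graph 7)) = 9"
proof (rule gamma_eq[where xs = "[(0, 1), (0, 4), (0, 6), (1, 0), (1, 2), (1, 3), (2, 5), (3, 5), (4, 5)]"])
  show "chk 5 7 [(0, 1), (0, 4), (0, 6), (1, 0), (1, 2), (1, 3), (2, 5), (3, 5), (4, 5)]" by code_simp
  fix S assume "total_k_dominating (cart_prod (complete_graph 5) (complete_graph 7)) 2 S"
  from lower[OF this] show "9 \<le> card S" by presburger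
qed simp_all

lemma g_6_8: "gamma_2t (cart_prod (complete_graph 6) (complete_graph 8)) = 11"
proof (rule gamma_eq[where xs = "[(0, 0), (1, 0), (2, 1), (2, 4), (2, 5), (2, 7), (3, 0), (4, 2), (4, 3), (4, 6), (5, 0)]"])
  show "chk 6 8 [(0, 0), (1, 0), (2, 1), (2, 4), (2, 5), (2, 7), (3, 0), (4, 2), (4, 3), (4, 6), (5, 0)]" by code_simp
  fix S assume "total_k_dominating (cart_prod (complete_graph 6) (complete_graph 8)) 2 S"
  from lower[OF this] show "11 \<le> card S" by presburger
qed simp_all

lemma g_7_9: "gamma_2t (cart_prod (complete_graph 7) (complete_graph 9)) = 13"
proof (rule gamma_eq[where xs = "[(0, 2), (1, 5), (1, 7), (1, 8), (2, 2), (3, 0), (3, 4), (3, 6), (4, 2), (5, 2), (6, 1), (6, 3), (6, 5)]"])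
  show "chk 7 9 [(0, 2), (1, 5), (1, 7), (1, 8), (2, 2), (3, 0), (3, 4), (3, 6), (4, 2), (5, 2), (6, 1), (6, 3), (6, 5)]" by code_simp
  fix S assume "total_k_dominating (cart_prod (complete_graph 7) (complete_graph 9)) 2 S"
  from lower[OF this] show "13 \<le> card S" by presburger
qed simp_all

theorem proposition13:
  shows "gamma_2t (cart_prod (complete_graph 2) (complete_graph 3)) = 4 \<and>
    gamma_2t (cart_prod (complete_graph 3) (complete_graph 4)) = 6 \<and>
    gamma_2t (cart_prod (complete_graph 4) (complete_graph 5)) = 7 \<and>
    gamma_2t (cart_prod (complete_graph 5) (complete_graph 6)) = 9 \<and>
    gamma_2t (cart_prod (complete_graph 6) (complete_graph 7)) = 10 \<and>
    gamma_2t (cart_prod (complete_graph 2) (complete_graph 4)) = 4 \<and>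
    gamma_2t (cart_prod (complete_graph 3) (complete_graph 5)) = 6 \<and>
    gamma_2t (cart_prod (complete_graph 4) (complete_graph 6)) = 8 \<and>
    gamma_2t (cart_prod (complete_graph 5) (complete_graph 7)) = 9 \<and>
    gamma_2t (cart_prod (complete_graph 6) (complete_graph 8)) = 11 \<and>
    gamma_2t (cart_prod (complete_graph 7) (complete_graph 9)) = 13"
  using g_2_3 g_3_4 g_4_5 g_5_6 g_6_7 g_2_4 g_3_5 g_4_6 g_5_7 g_6_8 g_7_9 by simp

end
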